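(* Let $b(n)$ be the number of non-squashing partitions of $n$ into distinct parts. Then $b(0)=b(1)=1$, and for $m\ge1$, $b(2m)=b(2m-1)+b(m)-1$ and $b(2m+1)=b(2m)+1$. The generating function $B(x)=\sum_{n\ge0} b(n)x^n$ satisfies $$B(x)=\frac{1}{1-x}B(x^2)-\frac{x^2}{1-x^2},$$ and explicitly $$B(x)=1+\frac{x}{1-x}+\sum_{i=1}^{\infty}\frac{x^{3\cdot 2^{i-1}}}{\prod_{j=0}^{i}\left(1-x^{2^j}\right)}.$$
   Context: A partition $n=p_1+\cdots+p_k$ with $1\le p_1\le\cdots\le p_k$ is non-squashing if $p_1+\cdots+p_j\le p_{j+1}$ for all $1\le j\le k-1$. The empty partition of $0$ counts as a non-squashing partition into distinct parts. *)

theory Defs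
  imports "HOL-Computational_Algebra.Formal_Power_Series"
begin

text \<open>It is non-squashing if p_1 + ... + p_j \<le> p_(j+1) for 1 \<le> j \<le> k-1
  (0-based: sum of the first j entries \<le> entry j, for 1 \<le> j < k).\<close>

definition nonsquashing_distinct :: "nat \<Rightarrow> nat list \<Rightarrow> bool" where
  "nonsquashing_distinct n ps \<longleftrightarrow>
     (\<forall>p\<in>set ps. 1 \<le> p) \<and> sorted ps \<and> distinct ps \<and> sum_list ps = n \<and>
     (\<forall>j. 1 \<le> j \<and> j < length ps \<longrightarrow> sum_list (take j ps) \<le> ps ! j)"

definition b :: "nat \<Rightarrow> nat" where
  "b n = card {ps. nonsquashing_distinct n ps}"

definition B :: "real fps" where
  "B = Abs_fps (\<lambda>n. real (b n))"

end

theory Submission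
  imports Defs
begin

unbundle fps_syntax


lemma len_le_sum: "\<forall>x\<in>set xs. (1::nat) \<le> x \<Longrightarrow> length xs \<le> sum_list xs"
  by (induction xs) auto

lemma mem_le_sum: "x \<in> set xs \<Longrightarrow> (x::nat) \<le> sum_list xs"
  by (induction xs) auto

lemma nsd_sum: "nonsquashing_distinct n ps \<Longrightarrow> sum_list ps = n"
  by (simp add: nonsquashing_distinct_def)

lemma nsd_finite: "finite {ps. nonsquashing_distinct n ps}"
proof (rule finite_subset)
  show "{ps. nonsquashing_distinct n ps} \<subseteq> {xs. set xs \<subseteq> {0..n} \<and> length xs \<le> n}"
    using len_le_sum mem_le_sum by (fastforce simp: nonsquashing_distinct_def)
  show "finite {xs. set xs \<subseteq> {0..n} \<and> length xs \<le> n}"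
    by (rule finite_lists_length_le) simp
qed

lemma single_sum:
  assumes "\<forall>x\<in>set qs. (1::nat) \<le> x" "p \<in> set qs" "sum_list qs \<le> p"
  shows "qs = [p]"
proof -
  have "sum_list qs = p + sum_list (remove1 p qs)"
    using assms(2) sum_list_map_remove1[of p qs "\<lambda>x. x"] by simp
  moreover have "length (remove1 p qs) \<le> sum_list (remove1 p qs)"
    using assms(1) by (intro len_le_sum) (auto dest: set_remove1_subset[THEN subsetD])
  ultimately have "length (remove1 p qs) = 0" using assms(3) by linarith
  thus ?thesis using assms(2) by (cases qs) (auto split: if_splits)
qed

lemma nsd_snoc:
  "nonsquashing_distinct n (qs @ [p]) \<longleftrightarrow>
   nonsquashing_distinct (sum_list qs) qs \<and> sum_list qs + p = n \<and> sum_list qs \<le> p \<and> 1 \<le> p \<and> qs \<noteq> [p]"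
proof -
  have pre: "(\<forall>j. 1 \<le> j \<and> j < length (qs @ [p]) \<longrightarrow> sum_list (take j (qs @ [p])) \<le> (qs @ [p]) ! j)
     \<longleftrightarrow> (\<forall>j. 1 \<le> j \<and> j < length qs \<longrightarrow> sum_list (take j qs) \<le> qs ! j) \<and> (qs \<noteq> [] \<longrightarrow> sum_list qs \<le> p)"
  proof (intro iffI conjI allI impI)
    fix j assume H: "\<forall>j. 1 \<le> j \<and> j < length (qs @ [p]) \<longrightarrow> sum_list (take j (qs @ [p])) \<le> (qs @ [p]) ! j"
      and j: "1 \<le> j \<and> j < length qs"
    then show "sum_list (take j qs) \<le> qs ! j" using H[rule_format, of j] by (simp add: nth_append)
  next
    assume H: "\<forall>j. 1 \<le> j \<and> j < length (qs @ [p]) \<longrightarrow> sum_list (take j (qs @ [p])) \<le> (qs @ [p]) ! j"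
      and "qs \<noteq> []"
    then show "sum_list qs \<le> p" using H[rule_format, of "length qs"] by (simp add: Suc_le_eq)
  next
    fix j assume H: "(\<forall>j. 1 \<le> j \<and> j < length qs \<longrightarrow> sum_list (take j qs) \<le> qs ! j) \<and> (qs \<noteq> [] \<longrightarrow> sum_list qs \<le> p)"
      and j: "1 \<le> j \<and> j < length (qs @ [p])"
    show "sum_list (take j (qs @ [p])) \<le> (qs @ [p]) ! j"
    proof (cases "j < length qs")
      case True thus ?thesis using H j by (simp add: nth_append)
    next
      case False
      hence "j = length qs" using j by simp
      thus ?thesis using H j by auto
    qed
  qed
  show ?thesis
  proof
    assume A: "nonsquashing_distinct n (qs @ [p])"
    hence s: "sum_list qs \<le> p"
      using pre by (cases "qs = []") (auto simp: nonsquashing_distinct_def)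
    show "nonsquashing_distinct (sum_list qs) qs \<and> sum_list qs + p = n \<and> sum_list qs \<le> p \<and> 1 \<le> p \<and> qs \<noteq> [p]"
      using A s pre by (auto simp: nonsquashing_distinct_def sorted_append)
  next
    assume A: "nonsquashing_distinct (sum_list qs) qs \<and> sum_list qs + p = n \<and> sum_list qs \<le> p \<and> 1 \<le> p \<and> qs \<noteq> [p]"
    have le: "\<forall>x\<in>set qs. x \<le> p" using A mem_le_sum order_trans by blast
    have nin: "p \<notin> set qs" using A single_sum by (auto simp: nonsquashing_distinct_def)
    show "nonsquashing_distinct n (qs @ [p])"
      using A le nin pre by (auto simp: nonsquashing_distinct_def sorted_append)
  qed
qed

lemma b_rec:
  assumes n: "n \<ge> 1"
  shows "b n + (if even n then 1 else 0) = (\<Sum>s\<le>n div 2. b s)"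
proof -
  define A where "A = (\<Union>s\<in>{..n div 2}. {qs. nonsquashing_distinct s qs})"
  define bad where "bad = (if even n then {[n div 2]} else {})"
  define f where "f = (\<lambda>qs. qs @ [n - sum_list qs])"
  have eq: "{ps. nonsquashing_distinct n ps} = f ` (A - bad)"
  proof (intro equalityI subsetI)
    fix ps assume "ps \<in> {ps. nonsquashing_distinct n ps}"
    hence P: "nonsquashing_distinct n ps" by simp
    have "ps \<noteq> []" using P n by (auto simp: nonsquashing_distinct_def)
    then obtain qs p where ps: "ps = qs @ [p]" by (metis append_butlast_last_id)
    have Q: "nonsquashing_distinct (sum_list qs) qs \<and> sum_list qs + p = n \<and> sum_list qs \<le> p \<and> 1 \<le> p \<and> qs \<noteq> [p]"
      using P ps nsd_snoc by simp
    have "qs \<in> A" using Q unfolding A_def by auto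
    moreover have "qs \<notin> bad" using Q unfolding bad_def by auto
    moreover have "ps = f qs" using Q ps unfolding f_def by auto
    ultimately show "ps \<in> f ` (A - bad)" by blast
  next
    fix ps assume "ps \<in> f ` (A - bad)"
    then obtain qs s where qs: "ps = f qs" "s \<le> n div 2" "nonsquashing_distinct s qs" "qs \<notin> bad"
      unfolding A_def by auto
    have ss: "sum_list qs = s" using qs nsd_sum by blast
    have "qs \<noteq> [n - s]"
    proof
      assume "qs = [n - s]"
      hence "s = n - s" using ss by simp
      hence "n = 2*s" using qs(2) by linarith
      hence "even n" "qs = [n div 2]" using `qs = [n - s]` by auto
      thus False using qs(4) unfolding bad_def by simp
    qed
    moreover have "1 \<le> n - s" using qs(2) n by linarith
    ultimately show "ps \<in> {ps. nonsquashing_distinct n ps}"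
      using qs ss nsd_snoc[of n qs "n - s"] unfolding f_def by auto
  qed
  have inj: "inj_on f (A - bad)" unfolding f_def inj_on_def by auto
  have finA: "finite A" unfolding A_def using nsd_finite by auto
  have cardA: "card A = (\<Sum>s\<le>n div 2. b s)"
    unfolding A_def b_def
    by (rule card_UN_disjoint) (auto simp: nsd_finite dest: nsd_sum)
  have badA: "bad \<subseteq> A"
  proof (cases "even n")
    case True
    hence "nonsquashing_distinct (n div 2) [n div 2]" using n
      by (auto simp: nonsquashing_distinct_def)
    thus ?thesis using True unfolding bad_def A_def by auto
  qed (simp add: bad_def)
  have "b n = card (A - bad)" unfolding b_def eq using card_image[OF inj] by simp
  also have "\<dots> = card A - card bad" using badA finA by (simp add: card_Diff_subset finite_subset)
  finally show ?thesis using cardA badA finA card_mono[OF finA badA] by (auto simp: bad_def)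
qed

lemma b0: "b 0 = 1"
proof -
  have "{ps. nonsquashing_distinct 0 ps} = {[]}"
  proof safe
    fix ps assume "nonsquashing_distinct 0 ps"
    thus "ps = []" by (cases ps) (auto simp: nonsquashing_distinct_def)
  qed (simp add: nonsquashing_distinct_def)
  thus ?thesis by (simp add: b_def)
qed




abbreviation X :: "real fps" where "X \<equiv> fps_X"

lemma comp_Xpow_nth:
  assumes k: "k > 0"
  shows "(F oo fps_X ^ k) $ n = (if k dvd n then F $ (n div k) else (0::real))"
proof -
  have "(F oo fps_X ^ k) $ n = (\<Sum>i=0..n. F $ i * (if n = k * i then 1 else 0))"
    by (simp add: fps_compose_nth power_mult[symmetric])
  also have "\<dots> = (\<Sum>i=0..n. if i = n div k \<and> k dvd n then F $ i else 0)"
    by (rule sum.cong) (use k in auto)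
  also have "\<dots> = (if k dvd n then F $ (n div k) else 0)"
    using k by (auto simp: sum.delta' div_le_dividend)
  finally show ?thesis .
qed

lemma comp_Xpow: "m > 0 \<Longrightarrow> (fps_X ^ j oo fps_X ^ m :: real fps) = fps_X ^ (m * j)"
  by (simp add: fps_compose_power[symmetric] power_mult)

lemma comp_inv:
  assumes "F $ 0 \<noteq> 0" "H $ 0 = 0"
  shows "inverse F oo H = inverse (F oo (H :: real fps))"
proof -
  have 1: "(inverse F oo H) * (F oo H) = 1"
    using assms by (simp add: fps_compose_mult_distrib[symmetric] inverse_mult_eq_1)
  have 2: "inverse (F oo H) * (F oo H) = 1" using assms by (simp add: inverse_mult_eq_1)
  have "inverse F oo H = (inverse F oo H) * ((F oo H) * inverse (F oo H))"
    using assms by (simp add: inverse_mult_eq_1')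
  also have "\<dots> = inverse (F oo H)" using 1 by (simp add: mult.assoc[symmetric])
  finally show ?thesis .
qed

lemma comp_assoc2: "(F oo fps_X ^ 2) oo fps_X ^ (2 ^ k) = (F oo fps_X ^ (2 ^ Suc k) :: real fps)"
proof -
  have "F oo (fps_X ^ 2 oo fps_X ^ (2 ^ k)) = (F oo fps_X ^ 2) oo fps_X ^ (2 ^ k)"
    by (rule fps_compose_assoc) simp_all
  moreover have "(fps_X ^ 2 oo fps_X ^ (2 ^ k) :: real fps) = fps_X ^ (2 ^ Suc k)"
    by (simp add: comp_Xpow mult.commute)
  ultimately show ?thesis by simp
qed

definition C :: "real fps" where "C = Abs_fps (\<lambda>n. real (\<Sum>s\<le>n div 2. b s))"
definition G :: "real fps" where "G = Abs_fps (\<lambda>n. if even n \<and> n \<noteq> 0 then 1 else 0)"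

lemma B_CG: "B = C - G"
proof (rule fps_ext)
  fix n
  show "B $ n = (C - G) $ n"
  proof (cases "n = 0")
    case True thus ?thesis by (simp add: B_def C_def G_def b0)
  next
    case False
    hence "b n + (if even n then 1 else 0) = (\<Sum>s\<le>n div 2. b s)" by (intro b_rec) simp
    hence "real (b n) + (if even n then 1 else 0) = real (\<Sum>s\<le>n div 2. b s)"
      by (metis (mono_tags) of_nat_1 of_nat_0 of_nat_add)
    thus ?thesis using False by (simp add: B_def C_def G_def)
  qed
qed

lemma C_rel: "(1 - X) * C = B oo fps_X ^ 2"
proof (rule fps_ext)
  fix n
  show "((1 - X) * C) $ n = (B oo fps_X ^ 2) $ n"
  proof (cases n)
    case 0 thus ?thesis by (simp add: comp_Xpow_nth C_def B_def algebra_simps)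
  next
    case (Suc m)
    have "((1 - X) * C) $ n = C $ n - C $ m"
      using Suc by (simp add: algebra_simps fps_X_mult_nth)
    also have "\<dots> = (if even n then real (b (n div 2)) else 0)"
    proof (cases "even n")
      case True
      hence "n div 2 = Suc (m div 2)" using Suc by presburger
      thus ?thesis using True by (simp add: C_def)
    next
      case False
      hence "n div 2 = m div 2" using Suc by presburger
      thus ?thesis using False by (simp add: C_def)
    qed
    also have "\<dots> = (B oo fps_X ^ 2) $ n" by (simp add: comp_Xpow_nth B_def)
    finally show ?thesis .
  qed
qed

lemma G_rel: "G * (1 - X ^ 2) = X ^ 2"
proof (rule fps_ext)
  fix n
  show "(G * (1 - X ^ 2)) $ n = (X ^ 2) $ n"
    by (cases n; cases "n - 1") (auto simp: algebra_simps fps_X_power_mult_nth G_def)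
qed

lemma FE: "B = (1 / (1 - fps_X)) * (B oo fps_X ^ 2) - fps_X ^ 2 / (1 - fps_X ^ 2)"
proof -
  have u1: "(1 - X) $ 0 \<noteq> 0" by simp
  have u2: "(1 - X ^ 2) $ 0 \<noteq> 0" by simp
  have "(1 / (1 - fps_X)) * (B oo fps_X ^ 2) = inverse (1 - X) * ((1 - X) * C)"
    using u1 by (simp add: fps_divide_unit C_rel)
  also have "\<dots> = (inverse (1 - X) * (1 - X)) * C" by (simp only: mult.assoc)
  also have "\<dots> = C" using u1 inverse_mult_eq_1[OF u1] by simp
  finally have 1: "(1 / (1 - fps_X)) * (B oo fps_X ^ 2) = C" .
  have "fps_X ^ 2 / (1 - fps_X ^ 2) = G * (1 - X ^ 2) * inverse (1 - X ^ 2)"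
    using u2 by (simp add: fps_divide_unit G_rel)
  also have "\<dots> = G * ((1 - X ^ 2) * inverse (1 - X ^ 2))" by (simp only: mult.assoc)
  also have "\<dots> = G" using inverse_mult_eq_1'[OF u2] by simp
  finally have 2: "fps_X ^ 2 / (1 - fps_X ^ 2) = G" .
  show ?thesis using B_CG 1 2 by simp
qed



definition D :: "real fps" where "D = B - 1 - fps_X / (1 - fps_X)"
definition P :: "nat \<Rightarrow> real fps" where "P N = (\<Prod>j<N. (1 - fps_X ^ (2 ^ j)))"

lemma D0: "D $ 0 = 0"
  by (simp add: D_def B_def b0 fps_divide_unit)

lemma D_rel: "D = X ^ 3 * inverse (1 - X) * inverse (1 - X ^ 2) + (D oo X ^ 2) * inverse (1 - X)"
proof -
  define i1 where "i1 = inverse (1 - X)"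
  define i2 where "i2 = inverse (1 - X ^ 2)"
  define Bs where "Bs = B oo X ^ 2"
  have r1: "i1 * (1 - X) = 1" unfolding i1_def by (rule inverse_mult_eq_1) simp
  have r2: "i2 * (1 - X ^ 2) = 1" unfolding i2_def by (rule inverse_mult_eq_1) simp
  have fe: "B = i1 * Bs - X ^ 2 * i2"
    using FE unfolding i1_def i2_def Bs_def by (simp add: fps_divide_unit)
  have Dd: "D = B - 1 - X * i1" unfolding D_def i1_def by (simp add: fps_divide_unit)
  have Ds: "D oo X ^ 2 = Bs - 1 - X ^ 2 * i2"
  proof -
    have "(X * i1) oo X ^ 2 = X ^ 2 * i2"
      unfolding i1_def i2_def
      by (simp add: fps_compose_mult_distrib comp_inv fps_compose_sub_distrib)
    thus ?thesis unfolding Dd Bs_def by (simp add: fps_compose_sub_distrib)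
  qed
  have h: "D = X ^ 3 * i1 * i2 + (Bs - 1 - X ^ 2 * i2) * i1"
    unfolding Dd fe using r1 r2 by algebra
  show ?thesis apply (subst Ds) using h unfolding i1_def i2_def .
qed

lemma sigma_step:
  "(D oo X ^ (2 ^ k)) = X ^ (3 * 2 ^ k) * inverse (1 - X ^ (2 ^ k)) * inverse (1 - X ^ (2 ^ Suc k))
     + (D oo X ^ (2 ^ Suc k)) * inverse (1 - X ^ (2 ^ k))"
proof -
  have h0: "(X ^ (2 ^ k)) $ 0 = 0" by simp
  have "(D oo X ^ (2 ^ k)) = (X ^ 3 * inverse (1 - X) * inverse (1 - X ^ 2) + (D oo X ^ 2) * inverse (1 - X)) oo X ^ (2 ^ k)"
    using D_rel by simp
  also have "\<dots> = (X ^ 3 oo X ^ (2 ^ k)) * inverse ((1 - X) oo X ^ (2 ^ k)) * inverse ((1 - X ^ 2) oo X ^ (2 ^ k))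
      + ((D oo X ^ 2) oo X ^ (2 ^ k)) * inverse ((1 - X) oo X ^ (2 ^ k))"
    by (simp add: fps_compose_mult_distrib[OF h0] fps_compose_add_distrib comp_inv[OF _ h0])
  also have "\<dots> = X ^ (3 * 2 ^ k) * inverse (1 - X ^ (2 ^ k)) * inverse (1 - X ^ (2 ^ Suc k))
     + (D oo X ^ (2 ^ Suc k)) * inverse (1 - X ^ (2 ^ k))"
    by (simp add: comp_assoc2 fps_compose_sub_distrib comp_Xpow mult.commute)
  finally show ?thesis .
qed

lemma P0: "P N $ 0 = 1"
  by (induction N) (simp_all add: P_def)

lemma invP_Suc: "inverse (P (Suc N)) = inverse (P N) * inverse (1 - X ^ (2 ^ N))"
  by (simp add: P_def fps_inverse_mult)

definition T :: "nat \<Rightarrow> real fps" where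
  "T i = fps_X ^ (3 * 2 ^ (Suc i - 1)) / (\<Prod>j = 0..Suc i. (1 - fps_X ^ (2 ^ j)))"

lemma T_alt: "T i = X ^ (3 * 2 ^ i) * inverse (P (Suc (Suc i)))"
proof -
  have "(\<Prod>j = 0..Suc i. (1 - fps_X ^ (2 ^ j))) = P (Suc (Suc i))"
    unfolding P_def by (simp add: atLeast0AtMost lessThan_Suc_atMost)
  thus ?thesis unfolding T_def using P0 by (simp add: fps_divide_unit)
qed

lemma D_partial: "D = (\<Sum>i<N. T i) + (D oo X ^ (2 ^ N)) * inverse (P N)"
proof (induction N)
  case 0 thus ?case by (simp add: P_def)
next
  case (Suc N)
  have "(D oo X ^ (2 ^ N)) * inverse (P N) = T N + (D oo X ^ (2 ^ Suc N)) * inverse (P (Suc N))"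
    unfolding T_alt invP_Suc by (subst sigma_step) (simp add: algebra_simps)
  thus ?case using Suc by (simp add: add.assoc)
qed

lemma rem_nth:
  assumes "n < 2 ^ N"
  shows "((D oo X ^ (2 ^ N)) * inverse (P N)) $ n = 0"
proof -
  have "(D oo X ^ (2 ^ N)) $ i = 0" if "i \<le> n" for i
  proof -
    have "i < 2 ^ N" using that assms by simp
    hence "2 ^ N dvd i \<longleftrightarrow> i = 0" by (auto dest: dvd_imp_le)
    thus ?thesis by (simp add: comp_Xpow_nth D0)
  qed
  thus ?thesis by (simp add: fps_mult_nth)
qed

lemma T_sums: "T sums D"
  unfolding sums_def
proof (rule tendsto_fpsI)
  fix n
  show "\<forall>\<^sub>F N in sequentially. (\<Sum>i<N. T i) $ n = D $ n"
    unfolding eventually_sequentially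
  proof (intro exI allI impI)
    fix N assume "n \<le> N"
    hence "n < 2 ^ N" using less_exp[of n] by (meson le_less_trans less_exp order.strict_trans1)
    hence "((D oo X ^ (2 ^ N)) * inverse (P N)) $ n = 0" by (rule rem_nth)
    thus "(\<Sum>i<N. T i) $ n = D $ n" using D_partial[of N] by (metis add.right_neutral fps_add_nth)
  qed
qed


theorem theorem2:
  shows "b 0 = 1 \<and> b 1 = 1 \<and>
    (\<forall>m\<ge>1. b (2*m) = b (2*m - 1) + b m - 1 \<and> b (2*m + 1) = b (2*m) + 1) \<and>
    B = (1 / (1 - fps_X)) * (B oo fps_X ^ 2) - fps_X ^ 2 / (1 - fps_X ^ 2) \<and>
    (\<exists>S. (\<lambda>i. fps_X ^ (3 * 2 ^ (Suc i - 1)) / (\<Prod>j = 0..Suc i. (1 - fps_X ^ (2 ^ j))) :: real fps)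
            sums S \<and>
         B = 1 + fps_X / (1 - fps_X) + S)"
proof -
  have b1: "b 1 = 1" using b_rec[of 1] b0 by simp
  have rec: "b (2*m) = b (2*m - 1) + b m - 1 \<and> b (2*m + 1) = b (2*m) + 1" if m: "m \<ge> 1" for m
  proof -
    have e1: "b (2*m) + 1 = (\<Sum>s\<le>m. b s)" using b_rec[of "2*m"] m by simp
    have e2: "b (2*m+1) = (\<Sum>s\<le>m. b s)" using b_rec[of "2*m+1"] m by simp
    have e3: "b (2*m-1) = (\<Sum>s\<le>m-1. b s)"
    proof -
      have "(2*m-1) div 2 = m - 1" "odd (2*m-1)" using m by presburger+
      thus ?thesis using b_rec[of "2*m-1"] m by simp
    qed
    have "(\<Sum>s\<le>m. b s) = (\<Sum>s\<le>m-1. b s) + b m"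
      using m by (metis Suc_diff_1 less_le_trans sum.atMost_Suc zero_less_one)
    thus ?thesis using e1 e2 e3 by linarith
  qed
  have ex: "\<exists>S. (\<lambda>i. fps_X ^ (3 * 2 ^ (Suc i - 1)) / (\<Prod>j = 0..Suc i. (1 - fps_X ^ (2 ^ j))) :: real fps)
            sums S \<and> B = 1 + fps_X / (1 - fps_X) + S"
    using T_sums unfolding T_def[abs_def] by (intro exI[of _ D]) (simp add: D_def)
  show ?thesis using b0 b1 rec FE ex by blast
qed

end
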